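(* Let $-\infty<t_1<t_2<+\infty$, $b>1$, and let $z\in\mathbb{C}$ with $\operatorname{Im}z>0$ satisfy $\bigl|z-\frac{t_1+t_2}2\bigr|\ge b\,\frac{t_2-t_1}2$. Then $$\omega(z,[t_1,t_2])\ge\frac{b-1}{2\pi b}\,\frac{(t_2-t_1)\operatorname{Im}z}{|z|^2-\operatorname{Re}z\,(t_1+t_2)+t_1t_2}\ge\frac{b-1}{2\pi b}\,\frac{(t_2-t_1)\operatorname{Im}z}{(|z|+|t_1|)(|z|+|t_2|)}.$$
   Context: For $z$ with $\operatorname{Im}z>0$ and Borel $B\subset\mathbb{R}$, $\omega(z,B)=\frac1\pi\int_B\frac{\operatorname{Im}z}{(t-\operatorname{Re}z)^2+(\operatorname{Im}z)^2}dt$ is the harmonic measure of the upper half-plane. *)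

theory Defs
  imports "HOL-Analysis.Analysis"
begin

definition harmonic_measure :: "complex \<Rightarrow> real set \<Rightarrow> real" where
  "harmonic_measure z B =
     (1 / pi) * (\<integral>t\<in>B. Im z / ((t - Re z)\<^sup>2 + (Im z)\<^sup>2) \<partial>lborel)"

end

theory Submission
  imports Defs
begin

lemma hm_eq:
  fixes t1 t2 :: real and z :: complex
  assumes "t1 \<le> t2" "Im z > 0"
  shows "harmonic_measure z {t1..t2} =
     (1/pi) * (arctan ((t2 - Re z) / Im z) - arctan ((t1 - Re z) / Im z))"
proof -
  let ?x = "Re z" and ?y = "Im z"
  let ?f = "\<lambda>t. ?y / ((t - ?x)\<^sup>2 + ?y\<^sup>2)"
  have d: "DERIV (\<lambda>t. arctan ((t - ?x) / ?y)) t :> ?f t" for t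
  proof -
    have "DERIV (\<lambda>t. arctan ((t - ?x) / ?y)) t :> inverse (1 + ((t - ?x) / ?y)\<^sup>2) * (1 / ?y)"
      using assms(2) by (auto intro!: derivative_eq_intros)
    moreover have "inverse (1 + ((t - ?x) / ?y)\<^sup>2) * (1 / ?y) = ?f t"
      using assms(2) by (simp add: field_simps power2_eq_square)
    ultimately show ?thesis by simp
  qed
  have c: "isCont ?f t" for t
  proof -
    have "(t - ?x)\<^sup>2 + ?y\<^sup>2 \<noteq> 0" using assms(2)
      by (metis add_nonneg_pos not_less_iff_gr_or_eq zero_le_power2 zero_less_power2)
    then show ?thesis by (auto intro!: continuous_intros)
  qed
  have "(\<integral>t\<in>{t1..t2}. ?f t \<partial>lborel) = (\<integral>t. ?f t * indicator {t1..t2} t \<partial>lborel)"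
    by (simp add: set_lebesgue_integral_def mult.commute)
  also have "\<dots> = arctan ((t2 - ?x) / ?y) - arctan ((t1 - ?x) / ?y)"
    by (rule integral_FTC_Icc_real[OF assms(1) d c])
  finally show ?thesis unfolding harmonic_measure_def by simp
qed

lemma arctan_lb:
  fixes u :: real assumes "u \<ge> 0" shows "arctan u \<ge> u / (1 + u)"
proof -
  let ?g = "\<lambda>u. arctan u - u / (1 + u)"
  have "?g 0 \<le> ?g u"
  proof (rule DERIV_nonneg_imp_nondecreasing[OF assms])
    fix v :: real assume v: "0 \<le> v" "v \<le> u"
    have "DERIV ?g v :> inverse (1 + v\<^sup>2) - ((1 + v) - v) / (1 + v)\<^sup>2"
      using v by (auto intro!: derivative_eq_intros simp: power2_eq_square)
    moreover have "inverse (1 + v\<^sup>2) - ((1 + v) - v) / (1 + v)\<^sup>2 \<ge> 0"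
    proof -
      have "1 + v\<^sup>2 \<le> (1 + v)\<^sup>2" using v by (simp add: power2_eq_square algebra_simps)
      moreover have p1: "0 < 1 + v\<^sup>2" by (simp add: add_pos_nonneg)
      moreover have p2: "0 < (1 + v)\<^sup>2" using v by simp
      ultimately have "1 / (1 + v)\<^sup>2 \<le> 1 / (1 + v\<^sup>2)"
        using mult_pos_pos[OF p2 p1] by (intro divide_left_mono) auto
      then show ?thesis by (simp add: inverse_eq_divide)
    qed
    ultimately show "\<exists>y. DERIV ?g v :> y \<and> y \<ge> 0" by blast
  qed
  then show ?thesis by simp
qed

lemma arctan_diff:
  fixes A B :: real assumes "B < A" "1 + A * B > 0"
  shows "arctan A - arctan B = arctan ((A - B) / (1 + A * B))"
proof -
  let ?a = "arctan A" and ?b = "arctan B"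
  have ca: "cos ?a > 0" and cb: "cos ?b > 0"
    by (simp_all add: cos_arctan add_pos_nonneg)
  have sa: "sin ?a = A * cos ?a" and sb: "sin ?b = B * cos ?b"
    by (simp_all add: cos_arctan sin_arctan)
  have cd: "cos (?a - ?b) = cos ?a * cos ?b * (1 + A * B)"
    by (simp add: cos_diff sa sb algebra_simps)
  have sd: "sin (?a - ?b) = cos ?a * cos ?b * (A - B)"
    by (simp add: sin_diff sa sb algebra_simps)
  have cpos: "cos (?a - ?b) > 0" using cd ca cb assms by simp
  have bnd: "-(pi/2) < ?a - ?b" "?a - ?b < pi/2"
  proof -
    have "?b < ?a" using assms arctan_monotone by blast
    moreover have "?a - ?b < pi" using arctan_bounded[of A] arctan_bounded[of B] by linarith
    moreover have "pi > 0" by simp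
    ultimately show "-(pi/2) < ?a - ?b" by linarith
    show "?a - ?b < pi/2"
    proof (rule ccontr)
      assume "\<not> ?thesis"
      then have "pi/2 \<le> ?a - ?b" by simp
      then have "0 \<le> cos (pi - (?a - ?b))" using \<open>?a - ?b < pi\<close>
        by (intro cos_ge_zero) auto
      then have "cos (?a - ?b) \<le> 0" by (simp add: cos_diff)
      then show False using cpos by simp
    qed
  qed
  have "tan (?a - ?b) = (A - B) / (1 + A * B)"
    using ca cb by (simp add: tan_def sd cd)
  then show ?thesis using arctan_tan[OF bnd] by simp
qed

theorem proposition4:
  fixes t1 t2 b :: real and z :: complex
  assumes "t1 < t2" and "b > 1" and "Im z > 0"
    and "cmod (z - complex_of_real ((t1 + t2) / 2)) \<ge> b * ((t2 - t1) / 2)"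
  shows "harmonic_measure z {t1..t2} \<ge>
           (b - 1) / (2 * pi * b) * ((t2 - t1) * Im z /
              ((cmod z)\<^sup>2 - Re z * (t1 + t2) + t1 * t2)) \<and>
         (b - 1) / (2 * pi * b) * ((t2 - t1) * Im z /
              ((cmod z)\<^sup>2 - Re z * (t1 + t2) + t1 * t2)) \<ge>
         (b - 1) / (2 * pi * b) * ((t2 - t1) * Im z /
              ((cmod z + \<bar>t1\<bar>) * (cmod z + \<bar>t2\<bar>)))"
proof -
  define x where "x = Re z"
  define y where "y = Im z"
  define c where "c = (t1 + t2) / 2"
  define h where "h = (t2 - t1) / 2"
  define r where "r = cmod (z - complex_of_real c)"
  define D where "D = (cmod z)\<^sup>2 - Re z * (t1 + t2) + t1 * t2"
  define u where "u = (t2 - t1) * Im z / D"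
  have y0: "y > 0" using assms y_def by simp
  have h0: "h > 0" using assms h_def by simp
  have rb: "r \<ge> b * h" using assms(4) unfolding r_def c_def h_def by simp
  have r2: "r\<^sup>2 = (x - c)\<^sup>2 + y\<^sup>2" unfolding r_def x_def y_def
    by (simp add: cmod_power2)
  have z2: "(cmod z)\<^sup>2 = x\<^sup>2 + y\<^sup>2" unfolding x_def y_def by (simp add: cmod_power2)
  have Dr: "D = r\<^sup>2 - h\<^sup>2" unfolding D_def r2 z2 c_def h_def x_def[symmetric]
    by (simp add: power2_eq_square field_simps)
  have hr: "h < r" using rb h0 assms(2)
    by (smt (verit) mult_less_cancel_right1)
  have r0: "r > 0" using hr h0 by simp
  have D0: "D > 0" unfolding Dr using hr h0
    by (simp add: power_strict_mono)
  have yr: "y \<le> r"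
  proof -
    have "y\<^sup>2 \<le> r\<^sup>2" using r2 by simp
    then show ?thesis using r0 y0 by (simp add: power2_le_iff_abs_le)
  qed
  have u_eq: "u = 2 * h * y / D" unfolding u_def h_def y_def using D0 by (simp add: field_simps)
  have u0: "u \<ge> 0" using u_eq h0 y0 D0 by simp
  have key: "2 * h * r * (b - 1) \<le> (b + 1) * (r\<^sup>2 - h\<^sup>2)"
  proof -
    have e: "(b + 1) * (r\<^sup>2 - h\<^sup>2) - 2 * h * r * (b - 1)
        = (r - b*h) * ((b+1)*(r + b*h) - 2*h*(b-1)) + (b-1)*(b\<^sup>2+1)*h\<^sup>2"
      by (simp add: power2_eq_square algebra_simps)
    have f1: "r - b*h \<ge> 0" using rb by simp
    have "(b+1)*(r + b*h) \<ge> (b+1) * (2*b*h)" using rb assms(2) by simp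
    moreover have "(b+1) * (2*b*h) \<ge> 2*h*(b-1)" using assms(2) h0
      by (simp add: algebra_simps)
    ultimately have f2: "(b+1)*(r + b*h) - 2*h*(b-1) \<ge> 0" by simp
    have f3: "(b-1)*(b\<^sup>2+1)*h\<^sup>2 \<ge> 0" using assms(2) by simp
    show ?thesis using e f1 f2 f3 mult_nonneg_nonneg[OF f1 f2] by linarith
  qed
  have "2 * h * y * (b - 1) \<le> 2 * h * r * (b - 1)"
    using yr h0 assms(2) by simp
  with key have "2 * h * y * (b - 1) \<le> (b + 1) * D" unfolding Dr by simp
  then have ub: "u * (b - 1) \<le> b + 1" unfolding u_eq using D0
    by (simp add: field_simps)
  have "harmonic_measure z {t1..t2} = (1/pi) * arctan u"
  proof -
    have A: "(t1 - x) / y < (t2 - x) / y" using assms(1) y0 by (simp add: divide_strict_right_mono)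
    have e1: "1 + (t2 - x) / y * ((t1 - x) / y) = D / y\<^sup>2"
      unfolding D_def z2 x_def[symmetric] using y0 by (simp add: field_simps power2_eq_square)
    have "1 + (t2 - x) / y * ((t1 - x) / y) > 0" unfolding e1 using D0 y0 by simp
    note ad = arctan_diff[OF A this]
    have "((t2 - x) / y - (t1 - x) / y) / (1 + (t2 - x) / y * ((t1 - x) / y)) = u"
      unfolding e1 u_def y_def[symmetric] using y0 D0 by (simp add: field_simps power2_eq_square)
    then show ?thesis using hm_eq[of t1 t2 z] assms ad unfolding x_def y_def by simp
  qed
  also have "\<dots> \<ge> (1/pi) * (u / (1 + u))" using arctan_lb[OF u0]
    by (intro mult_left_mono) auto
  moreover have "u / (1 + u) \<ge> (b - 1) / (2 * b) * u"
  proof -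
    have "(b - 1) * (1 + u) \<le> 2 * b" using ub by (simp add: algebra_simps)
    then have "(b - 1) * (1 + u) * u \<le> 2 * b * u" using u0 by (simp add: mult_right_mono)
    then show ?thesis using u0 assms(2) by (simp add: field_simps)
  qed
  ultimately have H1: "harmonic_measure z {t1..t2} \<ge> (1/pi) * ((b - 1) / (2 * b) * u)"
    by (smt (verit) mult_left_mono pi_gt_zero divide_nonneg_pos zero_le_one)
  have "(1/pi) * ((b - 1) / (2 * b) * u) = (b - 1) / (2 * pi * b) * u" by simp
  with H1 have I1: "harmonic_measure z {t1..t2} \<ge> (b - 1) / (2 * pi * b) * u" by simp
  have "D \<le> (cmod z + \<bar>t1\<bar>) * (cmod z + \<bar>t2\<bar>)"
  proof -
    have "\<bar>Re z\<bar> \<le> cmod z" by (rule abs_Re_le_cmod)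
    then have "- (Re z * (t1 + t2)) \<le> cmod z * (\<bar>t1\<bar> + \<bar>t2\<bar>)"
    proof -
      have "- (Re z * (t1 + t2)) \<le> \<bar>Re z\<bar> * \<bar>t1 + t2\<bar>"
        by (metis abs_ge_minus_self abs_mult)
      also have "\<dots> \<le> cmod z * (\<bar>t1\<bar> + \<bar>t2\<bar>)"
        using \<open>\<bar>Re z\<bar> \<le> cmod z\<close> by (intro mult_mono) (auto simp: abs_triangle_ineq)
      finally show ?thesis .
    qed
    moreover have "t1 * t2 \<le> \<bar>t1\<bar> * \<bar>t2\<bar>" by (metis abs_ge_self abs_mult)
    ultimately show ?thesis unfolding D_def by (simp add: power2_eq_square algebra_simps)
  qed
  then have "(t2 - t1) * Im z / D \<ge> (t2 - t1) * Im z / ((cmod z + \<bar>t1\<bar>) * (cmod z + \<bar>t2\<bar>))"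
    using D0 assms by (intro divide_left_mono) auto
  then have I2: "(b - 1) / (2 * pi * b) * u \<ge> (b - 1) / (2 * pi * b) * ((t2 - t1) * Im z /
              ((cmod z + \<bar>t1\<bar>) * (cmod z + \<bar>t2\<bar>)))"
    unfolding u_def using assms(2) by (intro mult_left_mono) auto
  show ?thesis using I1 I2 unfolding u_def D_def by simp
qed

end
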